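(* Let $f(x)=\sum_{i=0}^d a_ix^i\in k[x]$ satisfy condition $(\ast)$. Then there exists a dense open subset $U_f\subseteq\mathbb G_{m,k}$ (with coordinate $s$) such that for all $s\in U_f$ the degree of an Artin–Schreier reduced form of $sf(x)$ is constant and equal to $e(f):=\max\{ i_{\hat p} : 1\le i\le d,\ a_i\neq 0\}$.
   Context: Let $p$ be a prime and $k$ a finite field of characteristic $p$. Condition $(\ast)$ on $f=\sum a_ix^i$: there exists an integer $i>0$ which is not a power of $p$ with $a_i\neq 0$. For a positive integer $n$, $n_{\hat p}$ denotes its prime-to-$p$ part. Two polynomials in $k[x]$ (or $\bar k[x]$) are Artin–Schreier equivalent if their difference is of the form $h^p-h$ for some polynomial $h$. A polynomial $g=\sum b_ix^i$ is an Artin–Schreier reduced form of $f$ if it is Artin–Schreier equivalent to $f$ and $b_i=0$ for every $i>0$ divisible by $p$ (it is unique up to adding a constant). *)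

theory Defs
  imports "HOL-Algebra.Algebraic_Closure_Type"
begin

definition AS_equiv :: "'b::comm_ring_1 poly \<Rightarrow> 'b poly \<Rightarrow> bool" where
  "AS_equiv f g \<longleftrightarrow> (\<exists>h. f - g = h ^ CHAR('b) - h)"

definition AS_reduced_form :: "'b::comm_ring_1 poly \<Rightarrow> 'b poly \<Rightarrow> bool" where
  "AS_reduced_form f g \<longleftrightarrow>
     AS_equiv f g \<and> (\<forall>i. 0 < i \<and> CHAR('b) dvd i \<longrightarrow> coeff g i = 0)"

definition prime_to_part :: "nat \<Rightarrow> nat \<Rightarrow> nat" where
  "prime_to_part p n = n div p ^ multiplicity p n"

definition cond_star :: "nat \<Rightarrow> 'b::zero poly \<Rightarrow> bool" where
  "cond_star p f \<longleftrightarrow> (\<exists>i>0. (\<nexists>j. i = p ^ j) \<and> coeff f i \<noteq> 0)"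

definition AS_e :: "nat \<Rightarrow> 'b::zero poly \<Rightarrow> nat" where
  "AS_e p f = Max {prime_to_part p i | i. 1 \<le> i \<and> i \<le> degree f \<and> coeff f i \<noteq> 0}"

end

theory Submission
  imports Defs
begin
lemma ptp1:
  assumes "prime (p::nat)" "i > 0"
  shows "i = prime_to_part p i * p ^ multiplicity p i" "\<not> p dvd prime_to_part p i" "prime_to_part p i > 0"
proof -
  show 1: "i = prime_to_part p i * p ^ multiplicity p i"
    unfolding prime_to_part_def using multiplicity_dvd[of p i] by simp
  show "\<not> p dvd prime_to_part p i" unfolding prime_to_part_def
    using multiplicity_decompose[where p=p and x=i] prime_gt_1_nat[OF assms(1)] assms(2) by auto
  show "prime_to_part p i > 0" using 1 assms(2) by (metis gr0I mult_0)
qed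

lemma ptp2:
  assumes "prime (p::nat)" "\<not> p dvd j" "j > 0"
  shows "prime_to_part p (j * p ^ k) = j"
proof -
  have "multiplicity p (j * p ^ k) = k"
    using assms prime_elem_multiplicity_mult_distrib[of p j "p^k"]
    by (simp add: not_dvd_imp_multiplicity_0 prime_gt_0_nat)
  thus ?thesis unfolding prime_to_part_def using assms by (simp add: prime_gt_0_nat)
qed
lemma coeff_pow_char:
  fixes h :: "'b::comm_ring_1 poly"
  assumes pr: "prime CHAR('b)"
  shows "coeff (h ^ CHAR('b)) n = (if CHAR('b) dvd n then coeff h (n div CHAR('b)) ^ CHAR('b) else 0)"
proof -
  define p where "p = CHAR('b)"
  have p0: "p > 0" using pr p_def prime_gt_0_nat by blast
  have prp: "prime CHAR('b poly)" using pr by simp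
  have "h ^ p = (\<Sum>i\<le>degree h. monom (coeff h i) i) ^ p" by (simp add: poly_as_sum_of_monoms)
  also have "\<dots> = (\<Sum>i\<le>degree h. monom (coeff h i) i ^ p)"
    by (rule freshmans_dream_sum) (use prp p_def in auto)
  also have "\<dots> = (\<Sum>i\<le>degree h. monom (coeff h i ^ p) (i * p))" by (simp add: monom_power)
  finally have "coeff (h ^ p) n = (\<Sum>i\<le>degree h. if i * p = n then coeff h i ^ p else 0)"
    by (simp add: coeff_sum)
  also have "\<dots> = (if p dvd n then coeff h (n div p) ^ p else 0)"
  proof (cases "p dvd n")
    case True
    then obtain q where q: "n = q * p" by (metis dvd_def mult.commute)
    have "(\<Sum>i\<le>degree h. if i * p = n then coeff h i ^ p else 0) = (\<Sum>i\<le>degree h. if i = q then coeff h i ^ p else 0)"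
      using p0 q by (intro sum.cong) auto
    also have "\<dots> = coeff h q ^ p"
      using p0 by (auto simp: coeff_eq_0 zero_power)
    finally show ?thesis using True q p0 by simp
  next
    case False
    then show ?thesis by (intro trans[OF sum.neutral]) auto
  qed
  finally show ?thesis by (simp add: p_def)
qed
lemma exists_reduced_aux:
  fixes G :: "'c::alg_closed_field poly"
  assumes pr: "prime CHAR('c)"
  shows "(\<forall>i>n. CHAR('c) dvd i \<longrightarrow> coeff G i = 0) \<Longrightarrow> \<exists>r. AS_reduced_form G r"
proof (induction n arbitrary: G)
  case 0
  have "AS_equiv G G" unfolding AS_equiv_def by (intro exI[of _ 0]) (use pr in \<open>auto simp: prime_gt_0_nat\<close>)
  then show ?case using 0 unfolding AS_reduced_form_def by blast
next
  case (Suc n)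
  define p where "p = CHAR('c)"
  have p1: "p > 1" using pr p_def prime_gt_1_nat by blast
  show ?case
  proof (cases "p dvd Suc n \<and> coeff G (Suc n) \<noteq> 0")
    case False
    have "\<forall>i>n. CHAR('c) dvd i \<longrightarrow> coeff G i = 0"
    proof (intro allI impI)
      fix i assume "i > n" "CHAR('c) dvd i"
      then show "coeff G i = 0" using Suc.prems False p_def
        by (cases "i = Suc n") auto
    qed
    then show ?thesis using Suc.IH by blast
  next
    case True
    then obtain m where m: "Suc n = p * m" by (auto elim: dvdE)
    have m0: "m > 0" using m by (metis Zero_not_Suc mult_0_right neq0_conv)
    have mlt: "m < Suc n" unfolding m using m0 p1 by simp
    have mN: "m < Suc n" "m \<noteq> Suc n" using mlt by auto
    define c where "c = coeff G (Suc n)"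
    obtain c' where c': "c' ^ p = c" using nth_root_exists[of p c] p1 by auto
    define G' where "G' = G - monom c (Suc n) + monom c' m"
    have "\<forall>i>n. CHAR('c) dvd i \<longrightarrow> coeff G' i = 0"
    proof (intro allI impI)
      fix i assume i: "i > n" "CHAR('c) dvd i"
      show "coeff G' i = 0"
      proof (cases "i = Suc n")
        case True then show ?thesis using mN by (simp add: G'_def c_def)
      next
        case False then have "i > Suc n" using i by simp
        then show ?thesis using Suc.prems i mN by (simp add: G'_def)
      qed
    qed
    then obtain r where r: "AS_reduced_form G' r" using Suc.IH by blast
    then obtain h where h: "G' - r = h ^ p - h" unfolding AS_reduced_form_def AS_equiv_def p_def by blast
    have prp: "prime CHAR('c poly)" using pr by simp
    have "(h + monom c' m) ^ p = h ^ p + monom c' m ^ p"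
      by (rule freshmans_dream) (use prp p_def in auto)
    also have "monom c' m ^ p = monom c (Suc n)" using c' m by (simp add: monom_power mult.commute)
    finally have "G - r = (h + monom c' m) ^ p - (h + monom c' m)"
      using h unfolding G'_def by (simp add: algebra_simps)
    then have "AS_equiv G r" unfolding AS_equiv_def p_def by blast
    then show ?thesis using r unfolding AS_reduced_form_def by blast
  qed
qed

lemma exists_reduced:
  fixes G :: "'c::alg_closed_field poly"
  assumes pr: "prime CHAR('c)"
  shows "\<exists>r. AS_reduced_form G r"
  by (rule exists_reduced_aux[OF pr, of "degree G"]) (auto simp: coeff_eq_0)

lemma mp_add [simp]: "map_poly to_ac (P + Q) = map_poly to_ac P + map_poly to_ac (Q::'a::field poly)"
  by (rule poly_eqI) (simp add: coeff_map_poly)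
lemma mp_diff [simp]: "map_poly to_ac (P - Q) = map_poly to_ac P - map_poly to_ac (Q::'a::field poly)"
  by (rule poly_eqI) (simp add: coeff_map_poly)
lemma mp_mult [simp]: "map_poly to_ac (P * Q) = map_poly to_ac P * map_poly to_ac (Q::'a::field poly)"
  by (rule poly_eqI) (simp add: coeff_map_poly coeff_mult to_ac_sum)
lemma mp_power [simp]: "map_poly to_ac (P ^ n) = map_poly to_ac (P::'a::field poly) ^ n"
  by (induction n) auto

fun Vseq :: "'a::field poly \<Rightarrow> nat \<Rightarrow> nat \<Rightarrow> nat \<Rightarrow> 'a poly" where
  "Vseq f p e 0 = [:0, - coeff f e:]"
| "Vseq f p e (Suc k) = Vseq f p e k ^ p - [:0, coeff f (e * p ^ Suc k):]"

lemma Vseq_eval: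
  "poly (map_poly to_ac (Vseq f p e (Suc k))) s = poly (map_poly to_ac (Vseq f p e k)) s ^ p - s * to_ac (coeff f (e * p ^ Suc k))"
  by (simp add: map_poly_pCons)

lemma Vseq_eval0:
  "poly (map_poly to_ac (Vseq f p e 0)) s = - (s * to_ac (coeff f e))"
  by (simp add: map_poly_pCons)

lemma Vseq_at0: "p > 0 \<Longrightarrow> poly (Vseq f p e k) 0 = 0"
  by (induction k) auto

lemma Vseq_nz:
  assumes "p > 1" "coeff f (e * p ^ t) \<noteq> 0" "t \<le> k"
  shows "Vseq f p e k \<noteq> 0"
  using assms(3)
proof (induction k)
  case 0
  then show ?case using assms(2) by auto
next
  case (Suc k)
  let ?V = "Vseq f p e k"
  show ?case
  proof (cases "?V = 0")
    case True
    then have "t = Suc k" using Suc by (cases "t \<le> k") auto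
    then show ?thesis using True assms(1,2) by (simp add: zero_power)
  next
    case False
    have "poly ?V 0 = 0" using Vseq_at0[of p] assms(1) by simp
    then have c0: "coeff ?V 0 = 0" by (simp add: poly_0_coeff_0)
    have "degree ?V \<noteq> 0"
    proof
      assume "degree ?V = 0"
      then have "?V = 0" using c0 by (intro poly_eqI) (metis coeff_0 coeff_eq_0 neq0_conv)
      then show False using False by simp
    qed
    then have "degree ?V \<ge> 1" by simp
    moreover have "degree (?V ^ p) = p * degree ?V" using degree_power_eq[OF False] by simp
    ultimately have d: "degree (?V ^ p) \<ge> 2" using assms(1)
      by (metis Suc_1 Suc_leI mult_le_mono nat_mult_1_right)
    have "degree [:0, coeff f (e * p ^ Suc k):] \<le> 1" by (simp add: degree_pCons_le)
    then have "?V ^ p \<noteq> [:0, coeff f (e * p ^ Suc k):]" using d by auto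
    then show ?thesis by simp
  qed
qed

lemma less_pow: "(p::nat) > 1 \<Longrightarrow> k < p ^ k"
proof (induction k)
  case (Suc k)
  then have "k < p ^ k" by simp
  moreover have "2 * p ^ k \<le> p * p ^ k" using Suc.prems by (intro mult_right_mono) auto
  ultimately show ?case unfolding power_Suc by linarith
qed simp

theorem mainTheorem1:
  fixes f :: "'a::{field,finite} poly" and p :: nat
  assumes "prime p" and "CHAR('a) = p" and "cond_star p f"
  shows "\<exists>g :: 'a poly. g \<noteq> 0 \<and>
           (\<forall>s :: 'a alg_closure. s \<noteq> 0 \<and> poly (map_poly to_ac g) s \<noteq> 0 \<longrightarrow>
              (\<exists>r. AS_reduced_form (smult s (map_poly to_ac f)) r) \<and>
              (\<forall>r. AS_reduced_form (smult s (map_poly to_ac f)) r \<longrightarrow> degree r = AS_e p f))"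
proof -
  have p1: "p > 1" using assms(1) prime_gt_1_nat by blast
  define E where "E = {prime_to_part p i | i. 1 \<le> i \<and> i \<le> degree f \<and> coeff f i \<noteq> 0}"
  define e where "e = AS_e p f"
  have eE: "e = Max E" unfolding e_def E_def AS_e_def by simp
  have finE: "finite E"
  proof -
    have "E \<subseteq> prime_to_part p ` {1..degree f}" unfolding E_def by auto
    thus ?thesis by (rule finite_subset) auto
  qed
  obtain i0 where i0: "i0 > 0" "coeff f i0 \<noteq> 0" using assms(3) unfolding cond_star_def by blast
  have "i0 \<le> degree f" using i0 le_degree by blast
  hence Ene: "E \<noteq> {}" unfolding E_def using i0 by auto
  have "e \<in> E" using eE finE Ene Max_in by simp
  then obtain ie where ie: "1 \<le> ie" "ie \<le> degree f" "coeff f ie \<noteq> 0" "e = prime_to_part p ie"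
    unfolding E_def by auto
  have e0: "e > 0" and ep: "\<not> p dvd e" using ptp1[OF assms(1), of ie] ie by auto
  define t where "t = multiplicity p ie"
  have iet: "ie = e * p ^ t" using ptp1(1)[OF assms(1), of ie] ie t_def by simp
  have Ebound: "prime_to_part p i \<le> e" if "i \<ge> 1" "coeff f i \<noteq> 0" for i
  proof -
    have "i \<le> degree f" using that by (simp add: le_degree)
    hence "prime_to_part p i \<in> E" unfolding E_def using that by auto
    thus ?thesis using eE finE by simp
  qed
  define M where "M = degree f"
  have "t < p ^ t" using less_pow[OF p1] .
  also have "p ^ t \<le> e * p ^ t" using e0 by simp
  finally have tM: "t \<le> M" using iet ie(2) M_def by simp
  define g where "g = Vseq f p e M"
  have gnz: "g \<noteq> 0" using Vseq_nz[OF p1, of f e t M] ie(3) iet tM g_def by simp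
  have CH: "CHAR('a alg_closure) = p" using assms(2) by simp
  have prK: "prime CHAR('a alg_closure)" using CH assms(1) by simp
  have main: "(\<exists>r. AS_reduced_form (smult s (map_poly to_ac f)) r) \<and>
              (\<forall>r. AS_reduced_form (smult s (map_poly to_ac f)) r \<longrightarrow> degree r = AS_e p f)"
    if s: "poly (map_poly to_ac g) s \<noteq> 0" for s :: "'a alg_closure"
  proof (intro conjI allI impI)
    show "\<exists>r. AS_reduced_form (smult s (map_poly to_ac f)) r" using exists_reduced[OF prK] .
    define F where "F = smult s (map_poly to_ac f)"
    have cF: "coeff F i = s * to_ac (coeff f i)" for i unfolding F_def by (simp add: coeff_map_poly)
    fix r assume r: "AS_reduced_form (smult s (map_poly to_ac f)) r"
    obtain h where h: "F - r = h ^ p - h" using r CH unfolding AS_reduced_form_def AS_equiv_def F_def by auto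
    have rz: "coeff r i = 0" if "0 < i" "p dvd i" for i
      using r CH that unfolding AS_reduced_form_def by auto
    have coefeq: "coeff F n - coeff r n = (if p dvd n then coeff h (n div p) ^ p else 0) - coeff h n" for n
    proof -
      have "coeff (F - r) n = coeff (h ^ p - h) n" using h by simp
      thus ?thesis using coeff_pow_char[OF prK, of h n] CH by simp
    qed
    have rec: "coeff h (j * p ^ Suc k) = coeff h (j * p ^ k) ^ p - coeff F (j * p ^ Suc k)" if "0 < j" for j k
    proof -
      define n where "n = j * p ^ Suc k"
      have "p dvd n" "n > 0" "n div p = j * p ^ k" using that p1 by (auto simp: n_def)
      with coefeq[of n] rz[of n] show ?thesis by (simp add: n_def algebra_simps)
    qed
    have atj: "coeff r j = coeff F j + coeff h j" if "0 < j" "\<not> p dvd j" for j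
      using coefeq[of j] that by (simp add: algebra_simps)
    have hz: "coeff h (j * p ^ k) = 0" if "0 < j" "degree h \<le> k" for j k
    proof -
      have "k < p ^ k" using less_pow[OF p1] .
      also have "p ^ k \<le> j * p ^ k" using that by simp
      finally show ?thesis using that by (intro coeff_eq_0) simp
    qed
    have above: "coeff r i = 0" if "i > e" for i
    proof (cases "p dvd i")
      case True then show ?thesis using rz that by simp
    next
      case False
      have i0: "i > 0" using that by simp
      have Fz: "coeff F (i * p ^ k) = 0" for k
      proof (rule ccontr)
        assume "coeff F (i * p ^ k) \<noteq> 0"
        then have nz: "coeff f (i * p ^ k) \<noteq> 0" using cF by auto
        have "i * p ^ k \<ge> 1" using i0 p1 by simp
        then have "prime_to_part p (i * p ^ k) \<le> e" using Ebound nz by blast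
        then show False using ptp2[OF assms(1) False i0, of k] that by simp
      qed
      have pw: "coeff h (i * p ^ k) = coeff h i ^ (p ^ k)" for k
      proof (induction k)
        case (Suc k)
        then show ?case using rec[OF i0, of k] Fz[of "Suc k"] by (simp add: power_mult[symmetric] mult.commute)
      qed simp
      have "coeff h i ^ (p ^ degree h) = 0" using pw[of "degree h"] hz[OF i0, of "degree h"] by simp
      then have "coeff h i = 0" by simp
      then show ?thesis using atj[OF i0 False] Fz[of 0] by simp
    qed
    have dle: "degree r \<le> e" by (rule degree_le) (use above in auto)
    have "coeff r e \<noteq> 0"
    proof
      assume c: "coeff r e = 0"
      define u where "u k = coeff h (e * p ^ k)" for k
      have u0: "u 0 = - (s * to_ac (coeff f e))" using atj[OF e0 ep] c cF[of e] unfolding u_def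
        by (simp add: eq_neg_iff_add_eq_0 add.commute)
      have uk: "u k = poly (map_poly to_ac (Vseq f p e k)) s" for k
      proof (induction k)
        case 0 then show ?case using u0 Vseq_eval0[of f p e s] by (simp del: Vseq.simps)
      next
        case (Suc k) then show ?case using rec[OF e0, of k] Vseq_eval[of f p e k s] cF unfolding u_def by simp
      qed
      have fz: "coeff f (e * p ^ Suc (M + d)) = 0" for d
      proof (rule coeff_eq_0)
        have "Suc (M + d) < p ^ Suc (M + d)" using less_pow[OF p1] .
        also have "\<dots> \<le> e * p ^ Suc (M + d)" using e0 by simp
        finally show "degree f < e * p ^ Suc (M + d)" unfolding M_def by simp
      qed
      have big: "u (M + d) = u M ^ (p ^ d)" for d
      proof (induction d)
        case (Suc d)
        have "u (M + Suc d) = u (M + d) ^ p" using rec[OF e0, of "M + d"] fz[of d] cF unfolding u_def by simp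
        then show ?case using Suc by (simp add: power_mult[symmetric] mult.commute)
      qed simp
      have "u (M + degree h) = 0" unfolding u_def using hz[OF e0] by simp
      then have "u M = 0" using big[of "degree h"] by simp
      then show False using s uk[of M] g_def by simp
    qed
    then have "e \<le> degree r" by (rule le_degree)
    then show "degree r = AS_e p f" using dle e_def by simp
  qed
  show ?thesis using gnz main by blast
qed

end
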